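(* Every finite connected graph has a metric basis that contains no cut-vertices.
   Context: All graphs are simple. For vertices $u,v$ of a connected graph $G$, $d(u,v)$ is the length of a shortest $u$–$v$ path. A set $R\subseteq V(G)$ is a resolving set if for all distinct $x,y\in V(G)$ there is $r\in R$ with $d(r,x)\neq d(r,y)$. The metric dimension $\dim(G)$ is the minimum cardinality of a resolving set, and a resolving set of cardinality $\dim(G)$ is a metric basis. A cut-vertex is a vertex $v$ such that $G-v$ is disconnected. *)

theory Defs
  imports Main
begin

(* A simple graph is given by a vertex set V and a symmetric irreflexive
   edge relation E.  All walks are taken inside the vertex set V, so
   "E restricted to V" is the graph. *)

definition simple_graph :: "('a \<Rightarrow> 'a \<Rightarrow> bool) \<Rightarrow> 'a set \<Rightarrow> bool" where
  "simple_graph E V \<longleftrightarrow> (\<forall>x y. E x y \<longrightarrow> E y x) \<and> (\<forall>x. \<not> E x x)"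

fun walk :: "('a \<Rightarrow> 'a \<Rightarrow> bool) \<Rightarrow> 'a set \<Rightarrow> 'a list \<Rightarrow> bool" where
  "walk E V [] = False"
| "walk E V [x] = (x \<in> V)"
| "walk E V (x # y # xs) = (x \<in> V \<and> E x y \<and> walk E V (y # xs))"

definition connected_graph :: "('a \<Rightarrow> 'a \<Rightarrow> bool) \<Rightarrow> 'a set \<Rightarrow> bool" where
  "connected_graph E V \<longleftrightarrow>
     (\<forall>u\<in>V. \<forall>v\<in>V. \<exists>p. walk E V p \<and> hd p = u \<and> last p = v)"

definition dist :: "('a \<Rightarrow> 'a \<Rightarrow> bool) \<Rightarrow> 'a set \<Rightarrow> 'a \<Rightarrow> 'a \<Rightarrow> nat" where
  "dist E V u v = (LEAST n. \<exists>p. walk E V p \<and> hd p = u \<and> last p = v \<and> length p = Suc n)"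

definition resolving_set :: "('a \<Rightarrow> 'a \<Rightarrow> bool) \<Rightarrow> 'a set \<Rightarrow> 'a set \<Rightarrow> bool" where
  "resolving_set E V R \<longleftrightarrow> R \<subseteq> V \<and>
     (\<forall>x\<in>V. \<forall>y\<in>V. x \<noteq> y \<longrightarrow> (\<exists>r\<in>R. dist E V r x \<noteq> dist E V r y))"

definition metric_dim :: "('a \<Rightarrow> 'a \<Rightarrow> bool) \<Rightarrow> 'a set \<Rightarrow> nat" where
  "metric_dim E V = (LEAST k. \<exists>R. resolving_set E V R \<and> card R = k)"

definition metric_basis :: "('a \<Rightarrow> 'a \<Rightarrow> bool) \<Rightarrow> 'a set \<Rightarrow> 'a set \<Rightarrow> bool" where
  "metric_basis E V R \<longleftrightarrow> resolving_set E V R \<and> card R = metric_dim E V"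

definition cut_vertex :: "('a \<Rightarrow> 'a \<Rightarrow> bool) \<Rightarrow> 'a set \<Rightarrow> 'a \<Rightarrow> bool" where
  "cut_vertex E V v \<longleftrightarrow> v \<in> V \<and> \<not> connected_graph E (V - {v})"

end

theory Submission
  imports Defs
begin

definition reach :: "('a \<Rightarrow> 'a \<Rightarrow> bool) \<Rightarrow> 'a set \<Rightarrow> 'a \<Rightarrow> 'a \<Rightarrow> bool" where
  "reach E W x y \<longleftrightarrow> (\<exists>p. walk E W p \<and> hd p = x \<and> last p = y)"

lemma walk_ne: "walk E W p \<Longrightarrow> p \<noteq> []" by (cases p) auto

lemma walk_set: "walk E W p \<Longrightarrow> set p \<subseteq> W"
  by (induction E W p rule: walk.induct) auto

lemma walk_mono: "walk E W p \<Longrightarrow> set p \<subseteq> W' \<Longrightarrow> walk E W' p"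
  by (induction E W p rule: walk.induct) auto

lemma walk_Cons: "walk E W (x # p) \<longleftrightarrow> x \<in> W \<and> (p = [] \<or> (E x (hd p) \<and> walk E W p))"
  by (cases p) auto

lemma walk_append: "walk E W (xs @ y # ys) \<longleftrightarrow> walk E W (xs @ [y]) \<and> walk E W (y # ys)"
proof (induction xs)
  case Nil
  then show ?case by (auto simp: walk_Cons)
next
  case (Cons a xs)
  then show ?case by (cases xs) (auto simp: walk_Cons)
qed

lemma walk_concat:
  assumes "walk E W p" "walk E W q" "last p = hd q"
  shows "walk E W (p @ tl q)"
proof -
  have p: "p = butlast p @ [last p]" using walk_ne[OF assms(1)] by simp
  have q: "q = hd q # tl q" using walk_ne[OF assms(2)] by simp
  have "walk E W (butlast p @ last p # tl q)"
    using assms p q walk_append[of E W "butlast p" "last p" "tl q"] by metis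
  then show ?thesis by (metis append.assoc append_Cons append_Nil p)
qed

lemma walk_snoc: "walk E W q \<Longrightarrow> E (last q) x \<Longrightarrow> x \<in> W \<Longrightarrow> walk E W (q @ [x])"
proof -
  assume a: "walk E W q" "E (last q) x" "x \<in> W"
  have "last q \<in> W" using walk_set[OF a(1)] walk_ne[OF a(1)] by auto
  then show ?thesis using walk_concat[of E W q "[last q, x]"] a by auto
qed

lemma walk_rev:
  shows "(\<forall>x y. E x y \<longrightarrow> E y x) \<Longrightarrow> walk E W p \<Longrightarrow> walk E W (rev p)"
proof (induction E W p rule: walk.induct)
  case (3 E V x y xs)
  then have "walk E V (rev xs @ [y])" by simp
  moreover have "E y x" using 3 by auto
  ultimately have "walk E V ((rev xs @ [y]) @ [x])" using walk_snoc 3 by fastforce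
  then show ?case by simp
qed auto


lemma last_concat: "p \<noteq> [] \<Longrightarrow> q \<noteq> [] \<Longrightarrow> last p = hd q \<Longrightarrow> last (p @ tl q) = last q"
  by (cases q) auto

lemma psub_aux: "A \<subseteq> B - {v} \<Longrightarrow> v \<in> B \<Longrightarrow> A \<subset> B"
  by blast

lemma reach_refl: "x \<in> W \<Longrightarrow> reach E W x x"
  unfolding reach_def by (rule exI[of _ "[x]"]) auto

lemma reach_sym: "\<forall>x y. E x y \<longrightarrow> E y x \<Longrightarrow> reach E W x y \<Longrightarrow> reach E W y x"
proof -
  assume s: "\<forall>x y. E x y \<longrightarrow> E y x" and "reach E W x y"
  then obtain p where p: "walk E W p" "hd p = x" "last p = y" unfolding reach_def by blast
  have "walk E W (rev p)" using walk_rev[OF s p(1)] .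
  moreover have "hd (rev p) = y" "last (rev p) = x" using p walk_ne[OF p(1)] by (auto simp: hd_rev last_rev)
  ultimately show ?thesis unfolding reach_def by blast
qed

lemma reach_trans: "reach E W x y \<Longrightarrow> reach E W y z \<Longrightarrow> reach E W x z"
proof -
  assume "reach E W x y" "reach E W y z"
  then obtain p q where pq: "walk E W p" "hd p = x" "last p = y" "walk E W q" "hd q = y" "last q = z"
    unfolding reach_def by blast
  have "walk E W (p @ tl q)" using walk_concat[OF pq(1) pq(4)] pq(3,5) by simp
  moreover have "hd (p @ tl q) = x" using walk_ne[OF pq(1)] pq by simp
  moreover have "last (p @ tl q) = z" using last_concat[OF walk_ne[OF pq(1)] walk_ne[OF pq(4)]] pq
    by simp
  ultimately show ?thesis unfolding reach_def by blast
qed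

lemma reach_Cons: "x \<in> W \<Longrightarrow> E x y \<Longrightarrow> reach E W y z \<Longrightarrow> reach E W x z"
proof -
  assume a: "x \<in> W" "E x y" "reach E W y z"
  then obtain p where p: "walk E W p" "hd p = y" "last p = z" unfolding reach_def by blast
  have "walk E W (x # p)" using a p walk_ne[OF p(1)] by (simp add: walk_Cons)
  moreover have "last (x # p) = z" using p walk_ne[OF p(1)] by simp
  ultimately show ?thesis unfolding reach_def by (metis list.sel(1))
qed

lemma reach_mono: "reach E W x y \<Longrightarrow> W \<subseteq> W' \<Longrightarrow> reach E W' x y"
proof -
  assume a: "reach E W x y" "W \<subseteq> W'"
  then obtain p where p: "walk E W p" "hd p = x" "last p = y" unfolding reach_def by blast
  have "walk E W' p" using walk_mono[OF p(1)] walk_set[OF p(1)] a(2) by blast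
  then show ?thesis using p unfolding reach_def by blast
qed

lemma reach_in: "reach E W x y \<Longrightarrow> x \<in> W \<and> y \<in> W"
proof -
  assume a: "reach E W x y"
  then obtain p where p: "walk E W p" "hd p = x" "last p = y" unfolding reach_def by blast
  have "hd p \<in> set p" "last p \<in> set p" using walk_ne[OF p(1)] by auto
  then show ?thesis using walk_set[OF p(1)] p by auto
qed

locale G =
  fixes E :: "'a \<Rightarrow> 'a \<Rightarrow> bool" and V :: "'a set"
  assumes sg: "simple_graph E V" and fin: "finite V" and conn: "connected_graph E V"
begin

lemma symE: "E x y \<Longrightarrow> E y x" using sg unfolding simple_graph_def by blast

lemma symE': "\<forall>x y. E x y \<longrightarrow> E y x" using symE by blast

lemma reachV: "u \<in> V \<Longrightarrow> v \<in> V \<Longrightarrow> reach E V u v"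
  using conn unfolding connected_graph_def reach_def by blast

lemma dist_le: "walk E V p \<Longrightarrow> hd p = u \<Longrightarrow> last p = v \<Longrightarrow> dist E V u v < length p"
proof -
  assume a: "walk E V p" "hd p = u" "last p = v"
  have "length p = Suc (length p - 1)" using walk_ne[OF a(1)] by (cases p) auto
  then have "dist E V u v \<le> length p - 1" unfolding dist_def
    using a by (intro Least_le) blast
  then show ?thesis using walk_ne[OF a(1)] by (cases p) auto
qed

lemma dist_ex: "u \<in> V \<Longrightarrow> v \<in> V \<Longrightarrow>
   \<exists>p. walk E V p \<and> hd p = u \<and> last p = v \<and> length p = Suc (dist E V u v)"
proof -
  assume "u \<in> V" "v \<in> V"
  then obtain p where p: "walk E V p" "hd p = u" "last p = v" using reachV unfolding reach_def by blast
  have "length p = Suc (length p - 1)" using walk_ne[OF p(1)] by (cases p) auto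
  then have "\<exists>n. \<exists>p. walk E V p \<and> hd p = u \<and> last p = v \<and> length p = Suc n" using p by blast
  then show ?thesis unfolding dist_def by (rule LeastI_ex)
qed

lemma dist_refl: "u \<in> V \<Longrightarrow> dist E V u u = 0"
  using dist_le[of "[u]" u u] by auto

lemma dist_zero: "u \<in> V \<Longrightarrow> v \<in> V \<Longrightarrow> dist E V u v = 0 \<Longrightarrow> u = v"
proof -
  assume a: "u \<in> V" "v \<in> V" "dist E V u v = 0"
  then obtain p where "walk E V p" "hd p = u" "last p = v" "length p = 1" using dist_ex by fastforce
  then show ?thesis by (cases p) auto
qed

lemma dist_sym: "u \<in> V \<Longrightarrow> v \<in> V \<Longrightarrow> dist E V u v = dist E V v u"
proof -
  have *: "dist E V v u \<le> dist E V u v" if uv: "u \<in> V" "v \<in> V" for u v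
  proof -
    obtain p where p: "walk E V p" "hd p = u" "last p = v" "length p = Suc (dist E V u v)"
      using dist_ex uv by blast
    have "walk E V (rev p)" using walk_rev[OF symE' p(1)] .
    moreover have "hd (rev p) = v" "last (rev p) = u" using p walk_ne[OF p(1)] by (auto simp: hd_rev last_rev)
    ultimately have "dist E V v u < length (rev p)" using dist_le by blast
    then show ?thesis using p by simp
  qed
  assume "u \<in> V" "v \<in> V"
  then show ?thesis using *[of u v] *[of v u] by simp
qed

lemma dist_tri: "u \<in> V \<Longrightarrow> v \<in> V \<Longrightarrow> w \<in> V \<Longrightarrow> dist E V u w \<le> dist E V u v + dist E V v w"
proof -
  assume a: "u \<in> V" "v \<in> V" "w \<in> V"
  obtain p where p: "walk E V p" "hd p = u" "last p = v" "length p = Suc (dist E V u v)"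
    using dist_ex a by blast
  obtain q where q: "walk E V q" "hd q = v" "last q = w" "length q = Suc (dist E V v w)"
    using dist_ex a by blast
  have "walk E V (p @ tl q)" using walk_concat[OF p(1) q(1)] p(3) q(2) by simp
  moreover have "hd (p @ tl q) = u" using walk_ne[OF p(1)] p by simp
  moreover have "last (p @ tl q) = w" using last_concat[OF walk_ne[OF p(1)] walk_ne[OF q(1)]] p q
    by simp
  ultimately have "dist E V u w < length (p @ tl q)" using dist_le by blast
  then show ?thesis using p q by simp
qed

lemma dist_adj: "u \<in> V \<Longrightarrow> v \<in> V \<Longrightarrow> E u v \<Longrightarrow> dist E V u v = 1"
proof -
  assume a: "u \<in> V" "v \<in> V" "E u v"
  have "u \<noteq> v" using a sg unfolding simple_graph_def by auto
  then have "dist E V u v \<noteq> 0" using dist_zero a by blast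
  moreover have "dist E V u v < 2" using dist_le[of "[u,v]" u v] a by auto
  ultimately show ?thesis by simp
qed

lemma dist_next: "u \<in> V \<Longrightarrow> v \<in> V \<Longrightarrow> u \<noteq> v \<Longrightarrow>
   \<exists>u'. u' \<in> V \<and> E u u' \<and> Suc (dist E V u' v) = dist E V u v"
proof -
  assume a: "u \<in> V" "v \<in> V" "u \<noteq> v"
  obtain p where p: "walk E V p" "hd p = u" "last p = v" "length p = Suc (dist E V u v)"
    using dist_ex a by blast
  obtain u' q where pq: "p = u # u' # q"
  proof (cases p)
    case Nil then show ?thesis using walk_ne[OF p(1)] by simp
  next
    case (Cons a t)
    then show ?thesis using that p a(3) by (cases t) auto
  qed
  have w: "walk E V (u' # q)" "E u u'" using p(1) pq by auto
  have "u' \<in> V" using w walk_set by fastforce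
  have "dist E V u' v < length (u' # q)" using dist_le[OF w(1)] p pq by simp
  moreover have "dist E V u v \<le> dist E V u u' + dist E V u' v" using dist_tri a \<open>u' \<in> V\<close> by blast
  moreover have "dist E V u u' = 1" using dist_adj a \<open>u' \<in> V\<close> w by blast
  ultimately show ?thesis using p pq \<open>u' \<in> V\<close> w by auto
qed


lemma dist_far:
  assumes r: "r \<in> V" "r \<noteq> v" and v: "v \<in> V" and x: "x \<in> V"
    and far: "x = v \<or> \<not> reach E (V - {v}) r x"
  shows "dist E V r x = dist E V r v + dist E V v x"
proof (cases "x = v")
  case True
  then show ?thesis using dist_refl v by simp
next
  case False
  then have nr: "\<not> reach E (V - {v}) r x" using far by blast
  obtain p where p: "walk E V p" "hd p = r" "last p = x" "length p = Suc (dist E V r x)"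
    using dist_ex r x by blast
  have "v \<in> set p"
  proof (rule ccontr)
    assume "v \<notin> set p"
    then have "set p \<subseteq> V - {v}" using walk_set[OF p(1)] by blast
    then have "walk E (V - {v}) p" by (rule walk_mono[OF p(1)])
    then show False using nr p unfolding reach_def by blast
  qed
  then obtain p1 p2 where sp: "p = p1 @ v # p2" by (meson split_list)
  have "walk E V (p1 @ v # p2)" using p(1) sp by simp
  then have w1: "walk E V (p1 @ [v])" and w2: "walk E V (v # p2)"
    using walk_append[of E V p1 v p2] by auto
  have "p1 \<noteq> []" using sp p(2) r(2) by auto
  then have "hd (p1 @ [v]) = r" using sp p(2) by simp
  then have d1: "dist E V r v < length (p1 @ [v])" using dist_le[OF w1] by simp
  have "last (v # p2) = x" using sp p(3) by simp
  then have d2: "dist E V v x < length (v # p2)" using dist_le[OF w2] by simp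
  have "dist E V r v + dist E V v x \<le> dist E V r x" using d1 d2 p(4) sp by simp
  moreover have "dist E V r x \<le> dist E V r v + dist E V v x" using dist_tri r v x by blast
  ultimately show ?thesis by simp
qed

lemma neighbor_aux:
  "walk E V p \<Longrightarrow> hd p \<noteq> v \<Longrightarrow> last p = v \<Longrightarrow> \<exists>x. reach E (V - {v}) (hd p) x \<and> E x v"
proof (induction p)
  case Nil
  then show ?case by simp
next
  case (Cons a t)
  then obtain b t' where t: "t = b # t'" by (cases t) auto
  have a: "a \<in> V" "E a b" "walk E V t" using Cons.prems t by auto
  show ?case
  proof (cases "b = v")
    case True
    then show ?thesis using a Cons.prems reach_refl[of a "V - {v}" E] by auto
  next
    case False
    then obtain x where "reach E (V - {v}) b x" "E x v" using Cons.IH a Cons.prems t by auto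
    then show ?thesis using reach_Cons[of a "V - {v}" E b x] a Cons.prems by auto
  qed
qed

lemma neighbor: "a \<in> V \<Longrightarrow> v \<in> V \<Longrightarrow> a \<noteq> v \<Longrightarrow> \<exists>x. reach E (V - {v}) a x \<and> E x v"
  using reachV[of a v] neighbor_aux unfolding reach_def by blast

lemma resolving_lemma:
  assumes v: "v \<in> V" and T: "T \<subseteq> V - {v}" and res: "resolving_set E V (insert v T)"
    and cov: "\<forall>u\<in>V - {v}. \<exists>t\<in>T. reach E (V - {v}) t u"
    and t12: "t1 \<in> T" "t2 \<in> T" "\<not> reach E (V - {v}) t1 t2"
  shows "resolving_set E V T"
  unfolding resolving_set_def
proof (intro conjI ballI impI)
  show "T \<subseteq> V" using T by blast
  fix x y assume x: "x \<in> V" and y: "y \<in> V" and xy: "x \<noteq> y"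
  let ?W = "V - {v}"
  let ?R = "reach E ?W"
  have Rsym: "?R a b \<Longrightarrow> ?R b a" for a b using reach_sym[OF symE'] by blast
  have Rtrans: "?R a b \<Longrightarrow> ?R b c \<Longrightarrow> ?R a c" for a b c using reach_trans by metis
  have Rrefl: "a \<in> ?W \<Longrightarrow> ?R a a" for a using reach_refl by metis
  obtain r0 where r0: "r0 \<in> insert v T" "dist E V r0 x \<noteq> dist E V r0 y"
    using res x y xy unfolding resolving_set_def by blast
  show "\<exists>r\<in>T. dist E V r x \<noteq> dist E V r y"
  proof (rule ccontr)
    assume "\<not> ?thesis"
    then have eq: "\<forall>t\<in>T. dist E V t x = dist E V t y" by blast
    then have vxy: "dist E V v x \<noteq> dist E V v y" using r0 by auto
    have tV: "t \<in> V" "t \<noteq> v" if "t \<in> T" for t using T that by auto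
    have L1: "False" if t: "t \<in> T" and fx: "x = v \<or> \<not> ?R t x" and fy: "y = v \<or> \<not> ?R t y" for t
    proof -
      have "dist E V t x = dist E V t v + dist E V v x" using dist_far[OF tV[OF t] v x fx] .
      moreover have "dist E V t y = dist E V t v + dist E V v y" using dist_far[OF tV[OF t] v y fy] .
      ultimately show False using eq t vxy by auto
    qed
    show False
    proof (cases "x = v \<or> y = v")
      case True
      then have "x \<noteq> v \<or> y \<noteq> v" using xy by blast
      then obtain z where z: "z \<in> ?W" "z = x \<or> z = y" "z \<noteq> v" using x y by blast
      have "\<not> ?R t1 z \<or> \<not> ?R t2 z" using Rsym Rtrans t12(3) by metis
      then show False using L1 True z t12 by blast
    next
      case False
      then have xW: "x \<in> ?W" and yW: "y \<in> ?W" using x y by auto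
      show False
      proof (cases "?R x y")
        case True
        have "\<not> ?R t1 x \<or> \<not> ?R t2 x" using Rsym Rtrans t12(3) by metis
        then obtain t where "t \<in> T" "\<not> ?R t x" using t12 by blast
        moreover have "\<not> ?R t y" using Rsym Rtrans True \<open>\<not> ?R t x\<close> by metis
        ultimately show False using L1 by blast
      next
        case False
        obtain tx where tx: "tx \<in> T" "?R tx x" using cov xW by blast
        obtain ty where ty: "ty \<in> T" "?R ty y" using cov yW by blast
        have n1: "\<not> ?R tx y" using tx(2) False Rsym Rtrans by metis
        have n2: "\<not> ?R ty x" using ty(2) False Rsym Rtrans by metis
        have e1: "dist E V tx y = dist E V tx v + dist E V v y" using dist_far[OF tV[OF tx(1)] v y] n1 by blast
        have e2: "dist E V ty x = dist E V ty v + dist E V v x" using dist_far[OF tV[OF ty(1)] v x] n2 by blast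
        have i1: "dist E V tx x \<le> dist E V tx v + dist E V v x" using dist_tri tV[OF tx(1)] v x by blast
        have i2: "dist E V ty y \<le> dist E V ty v + dist E V v y" using dist_tri tV[OF ty(1)] v y by blast
        show False using e1 e2 i1 i2 eq tx(1) ty(1) vxy by fastforce
      qed
    qed
  qed
qed


lemma dim_le: "resolving_set E V T \<Longrightarrow> metric_dim E V \<le> card T"
  unfolding metric_dim_def by (rule Least_le) blast

lemma basis_ex: "\<exists>R. metric_basis E V R"
proof -
  have "resolving_set E V V"
    unfolding resolving_set_def
  proof (intro conjI ballI impI)
    fix x y assume "x \<in> V" "y \<in> V" "x \<noteq> y"
    then have "dist E V x x \<noteq> dist E V x y" using dist_refl dist_zero by metis
    then show "\<exists>r\<in>V. dist E V r x \<noteq> dist E V r y" using \<open>x \<in> V\<close> by blast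
  qed simp
  then have "\<exists>k R. resolving_set E V R \<and> card R = k" by blast
  then have "\<exists>R. resolving_set E V R \<and> card R = metric_dim E V"
    unfolding metric_dim_def by (rule LeastI_ex)
  then show ?thesis unfolding metric_basis_def by blast
qed

lemma improve:
  assumes B: "metric_basis E V R" and vR: "v \<in> R" and cut: "cut_vertex E V v"
  shows "\<exists>R'. metric_basis E V R' \<and> {r\<in>R'. cut_vertex E V r} \<subset> {r\<in>R. cut_vertex E V r}"
proof -
  define W where "W = V - {v}"
  define S where "S = R - {v}"
  let ?R = "reach E W"
  have Rsym: "?R a b \<Longrightarrow> ?R b a" for a b using reach_sym[OF symE'] by blast
  have Rtrans: "?R a b \<Longrightarrow> ?R b c \<Longrightarrow> ?R a c" for a b c using reach_trans by metis
  have Rrefl: "a \<in> W \<Longrightarrow> ?R a a" for a using reach_refl by metis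
  have Rin: "?R a b \<Longrightarrow> a \<in> W \<and> b \<in> W" for a b using reach_in by metis
  have resR: "resolving_set E V R" and cardR: "card R = metric_dim E V"
    using B unfolding metric_basis_def by auto
  have RV: "R \<subseteq> V" using resR unfolding resolving_set_def by blast
  have finR: "finite R" using RV fin finite_subset by blast
  have v: "v \<in> V" using vR RV by blast
  have SW: "S \<subseteq> W" using RV unfolding S_def W_def by blast
  have RS: "R = insert v S" using vR unfolding S_def by blast
  have cardS: "card S = card R - 1" using finR vR unfolding S_def by simp
  have cardR1: "card R \<ge> 1" using finR vR card_0_eq[OF finR] by fastforce
  have sV: "s \<in> V" "s \<noteq> v" if "s \<in> S" for s using that SW unfolding W_def by auto
  obtain a0 b0 where ab0: "a0 \<in> W" "b0 \<in> W" "\<not> ?R a0 b0"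
    using cut unfolding cut_vertex_def connected_graph_def reach_def W_def by blast
  have free_ex: "\<exists>a\<in>W. \<forall>s\<in>S. \<not> ?R s a"
  proof (rule ccontr)
    assume "\<not> ?thesis"
    then have cov: "\<forall>u\<in>W. \<exists>s\<in>S. ?R s u" by blast
    obtain sa where sa: "sa \<in> S" "?R sa a0" using cov ab0 by blast
    obtain sb where sb: "sb \<in> S" "?R sb b0" using cov ab0 by blast
    have "\<not> ?R sa sb" using sa(2) sb(2) ab0(3) Rsym Rtrans by metis
    then have "resolving_set E V S"
      using resolving_lemma[of v S sa sb] v SW RS resR cov sa sb unfolding W_def by auto
    then have "metric_dim E V \<le> card S" by (rule dim_le)
    then show False using cardS cardR cardR1 by simp
  qed
  have free_uniq: "?R a b" if a: "a \<in> W" "\<forall>s\<in>S. \<not> ?R s a" and b: "b \<in> W" "\<forall>s\<in>S. \<not> ?R s b" for a b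
  proof (rule ccontr)
    assume nab: "\<not> ?R a b"
    obtain xa where xa: "?R a xa" "E xa v" using neighbor[of a v] a v unfolding W_def by auto
    obtain xb where xb: "?R b xb" "E xb v" using neighbor[of b v] b v unfolding W_def by auto
    have xaW: "xa \<in> W" and xbW: "xb \<in> W" using Rin xa xb by auto
    have "\<not> ?R xa xb" using xa xb nab Rsym Rtrans by metis
    then have ne: "xa \<noteq> xb" using Rrefl xaW by blast
    have xaV: "xa \<in> V" "xa \<noteq> v" and xbV: "xb \<in> V" "xb \<noteq> v" using xaW xbW unfolding W_def by auto
    have d1: "dist E V v xa = 1" using dist_adj[OF xaV(1) v xa(2)] dist_sym xaV(1) v by simp
    have d2: "dist E V v xb = 1" using dist_adj[OF xbV(1) v xb(2)] dist_sym xbV(1) v by simp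
    have "\<forall>r\<in>R. dist E V r xa = dist E V r xb"
    proof
      fix r assume "r \<in> R"
      show "dist E V r xa = dist E V r xb"
      proof (cases "r = v")
        case True then show ?thesis using d1 d2 by simp
      next
        case False
        then have rS: "r \<in> S" using \<open>r \<in> R\<close> unfolding S_def by blast
        have n1: "\<not> ?R r xa" using a(2) rS xa(1) Rsym Rtrans by metis
        have n2: "\<not> ?R r xb" using b(2) rS xb(1) Rsym Rtrans by metis
        have "dist E V r xa = dist E V r v + dist E V v xa"
          using dist_far[OF sV[OF rS] v xaV(1)] n1 unfolding W_def by blast
        moreover have "dist E V r xb = dist E V r v + dist E V v xb"
          using dist_far[OF sV[OF rS] v xbV(1)] n2 unfolding W_def by blast
        ultimately show ?thesis using d1 d2 by simp
      qed
    qed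
    then show False using resR xaV xbV ne unfolding resolving_set_def by blast
  qed
  obtain a where a: "a \<in> W" "\<forall>s\<in>S. \<not> ?R s a" using free_ex by blast
  define C where "C = {u\<in>W. ?R a u}"
  have finC: "finite C" using fin unfolding C_def W_def by simp
  have aC: "a \<in> C" using a Rrefl unfolding C_def by blast
  define m where "m = Max (dist E V v ` C)"
  have "m \<in> dist E V v ` C" unfolding m_def using finC aC by (intro Max_in) auto
  then obtain w where wC: "w \<in> C" and wm: "dist E V v w = m" by blast
  have wmax: "dist E V v u \<le> dist E V v w" if "u \<in> C" for u
    using that finC wm unfolding m_def by simp
  have wW: "w \<in> W" and aw: "?R a w" using wC unfolding C_def by auto
  have wS: "w \<notin> S" using a(2) aw Rsym by blast
  have wv: "w \<noteq> v" "w \<in> V" using wW unfolding W_def by auto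
  have wR: "w \<notin> R" using wS wv unfolding S_def by blast
  obtain b where b: "b \<in> W" "\<not> ?R a b"
    using ab0 Rsym Rtrans by metis
  obtain sb where sb: "sb \<in> S" "?R sb b" using free_uniq[OF a] b by blast
  have nwsb: "\<not> ?R w sb" using aw sb(2) b(2) Rtrans by metis
  define T where "T = insert w S"
  have cov: "\<forall>u\<in>W. \<exists>t\<in>T. ?R t u"
  proof
    fix u assume u: "u \<in> W"
    show "\<exists>t\<in>T. ?R t u"
    proof (cases "\<exists>s\<in>S. ?R s u")
      case True then show ?thesis unfolding T_def by blast
    next
      case False
      then have "?R a u" using free_uniq[OF a u] by blast
      then have "?R w u" using aw Rsym Rtrans by metis
      then show ?thesis unfolding T_def by blast
    qed
  qed
  have TW: "T \<subseteq> W" using SW wW unfolding T_def by blast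
  have resT': "resolving_set E V (insert v T)"
    using resR RV wv unfolding resolving_set_def T_def RS by blast
  have resT: "resolving_set E V T"
    using resolving_lemma[of v T w sb] v TW resT' cov nwsb sb(1) unfolding W_def T_def by auto
  have finS: "finite S" using finR unfolding S_def by simp
  have "card T = card R" using cardS cardR1 wS finS unfolding T_def by simp
  then have basisT: "metric_basis E V T" using resT cardR unfolding metric_basis_def by simp
  have reach_v: "\<forall>u. u \<in> V - {w} \<longrightarrow> dist E V u v = n \<longrightarrow> reach E (V - {w}) u v" for n
  proof (induction n rule: less_induct)
    case (less n)
    show ?case
    proof (intro allI impI)
      fix u assume u: "u \<in> V - {w}" and dn: "dist E V u v = n"
      show "reach E (V - {w}) u v"
      proof (cases "u = v")
        case True then show ?thesis using u reach_refl by metis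
      next
        case False
        obtain u' where u': "u' \<in> V" "E u u'" "Suc (dist E V u' v) = dist E V u v"
          using dist_next[of u v] u v False by auto
        have "u' \<noteq> w"
        proof
          assume "u' = w"
          have uW: "u \<in> W" using u False unfolding W_def by blast
          have "?R w u" using reach_Cons[of w W E u u] wW symE[OF u'(2)] \<open>u' = w\<close> Rrefl[OF uW] by blast
          then have "u \<in> C" using aw Rtrans uW unfolding C_def by blast
          then have "dist E V v u \<le> dist E V v w" by (rule wmax)
          then show False using u'(3) \<open>u' = w\<close> dist_sym[of u v] dist_sym[of w v] u v wv by simp
        qed
        then have "reach E (V - {w}) u' v" using less u' dn by auto
        then show ?thesis using reach_Cons[of u "V - {w}" E u'] u u' by blast
      qed
    qed
  qed
  have "connected_graph E (V - {w})"
    unfolding connected_graph_def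
  proof (intro ballI)
    fix u1 u2 assume "u1 \<in> V - {w}" "u2 \<in> V - {w}"
    then have "reach E (V - {w}) u1 v" "reach E (V - {w}) u2 v" using reach_v by blast+
    then have "reach E (V - {w}) u1 u2" using reach_sym[OF symE'] reach_trans by metis
    then show "\<exists>p. walk E (V - {w}) p \<and> hd p = u1 \<and> last p = u2" unfolding reach_def .
  qed
  then have wnc: "\<not> cut_vertex E V w" unfolding cut_vertex_def by blast
  have sub: "{r\<in>T. cut_vertex E V r} \<subseteq> {r\<in>R. cut_vertex E V r} - {v}"
    using wnc unfolding T_def S_def by auto
  have "v \<in> {r\<in>R. cut_vertex E V r}" using vR cut by simp
  then have "{r\<in>T. cut_vertex E V r} \<subset> {r\<in>R. cut_vertex E V r}"
    by (rule psub_aux[OF sub])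
  then show ?thesis using basisT by blast
qed

end

theorem corollary1:
  fixes E :: "'a \<Rightarrow> 'a \<Rightarrow> bool" and V :: "'a set"
  assumes "simple_graph E V" and "finite V" and "V \<noteq> {}"
    and "connected_graph E V"
  shows "\<exists>R. metric_basis E V R \<and> (\<forall>v\<in>R. \<not> cut_vertex E V v)"
proof -
  interpret G E V using assms by unfold_locales
  obtain R0 where "metric_basis E V R0" using basis_ex by blast
  then obtain R where R: "metric_basis E V R"
    and least: "\<And>R'. metric_basis E V R' \<Longrightarrow> card {r\<in>R. cut_vertex E V r} \<le> card {r\<in>R'. cut_vertex E V r}"
    using ex_has_least_nat[of "metric_basis E V" R0 "\<lambda>R. card {r\<in>R. cut_vertex E V r}"] by blast
  have "\<forall>v\<in>R. \<not> cut_vertex E V v"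
  proof (intro ballI notI)
    fix v assume "v \<in> R" "cut_vertex E V v"
    then obtain R' where R': "metric_basis E V R'" "{r\<in>R'. cut_vertex E V r} \<subset> {r\<in>R. cut_vertex E V r}"
      using improve R by blast
    have "R \<subseteq> V" using R unfolding metric_basis_def resolving_set_def by blast
    then have "finite {r\<in>R. cut_vertex E V r}" using assms(2) finite_subset by fastforce
    then have "card {r\<in>R'. cut_vertex E V r} < card {r\<in>R. cut_vertex E V r}"
      using R'(2) psubset_card_mono by blast
    then show False using least[OF R'(1)] by simp
  qed
  then show ?thesis using R by blast
qed

end
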